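(* Let $v$ be a normalized, non-negative, submodular (not necessarily monotone) valuation, and run the mechanism BFM-SWM described in the context with $\ell=2$, $\alpha=1+\frac{2\sqrt{6}}{3}$, $\beta=4$ and any $\epsilon>0$, with all sellers behaving truthfully. Then the output $S^*$ satisfies $$v(S^* )-c(S^* )\ \ge\ 0.0328\cdot v(O)-c(O)-\epsilon/4,$$ where $O$ is an optimal solution of $\max\{v(S)-c(S): S\subseteq\mathcal{N},\ c(S)\le B\}$.
   Context: Setting. $\mathcal{N}$ is a finite set of $n$ sellers. The valuation $v:2^{\mathcal{N}}\to\mathbb{R}_{\ge 0}$ satisfies $v(\emptyset)=0$ and is submodular (for $X\subseteq Y\subseteq\mathcal{N}$ and $u\notin Y$, $v(u\mid Y)\le v(u\mid X)$), where $v(S\mid T)=v(S\cup T)-v(T)$, $v(u\mid T)=v(\{u\}\mid T)$. Each seller $u$ has a private cost $c(u)\ge 0$; $c(X)=\sum_{u\in X}c(u)$, $p(X)=\sum_{u\in X}p(u)$. $B>0$ is the budget, $[\ell]=\{1,\dots,\ell\}$. Sellers behave truthfully: a seller $u$ offered price $q$ accepts iff $c(u)\le q$. Mechanism BFM-SWM (inputs $B$, $\alpha>1$, $\beta>1$, $\epsilon>0$, $\ell\in\{1,2\}$): 1. Offer every seller the price $B$; let $R$ be the set of sellers who accept, and set $p(u)=B$ for $u\in R$. 2. Set $t=0$, $\rho_0=\epsilon/\alpha$, $u^*=\emptyset$ ($u^*$ is a set of at most one seller), and $S_{i,0}=\emptyset$ for $i\in[\ell]$. 3. Repeat rounds: set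 $t\leftarrow t+1$, $\rho_t=\alpha\rho_{t-1}$, $S_{i,t}=\emptyset$ for all $i\in[\ell]$. Process the sellers $u\in R\setminus(\bigcup_{i=1}^{\ell}S_{i,t-1}\cup u^* )$ one at a time in a fixed order. For each such $u$: pick $j\in\arg\max_{i\in[\ell]}v(u\mid S_{i,t})$ (current contents); update $p(u)\leftarrow\min\{p(u),\ v(u\mid S_{j,t})/(\beta+\rho_t/B)\}$ and offer $p(u)$ to $u$. If $u$ accepts: if $v(S_{j,t}\cup\{u\})-p(S_{j,t}\cup\{u\})>\rho_t$ (current prices), set $u^*\leftarrow\{u\}$ and end the round immediately; otherwise add $u$ to $S_{j,t}$. If $u$ rejects, remove $u$ from $R$. After the round, stop if $R\setminus\left(\bigcup_{i=1}^{\ell}(S_{i,t-1}\cup S_{i,t})\cup u^*\right)=\emptyset$; otherwise start another round. 4. Let $M$ be the final value of $t$. Output $S^*\in\arg\max_{A\in\{S_{i,t}: i\in[\ell],\ t\in\{M-1,M\}\}\cup\{u^*\}}\big(v(A)-p(A)\big)$, paying each $u\in S^*$ its current price $p(u)$. *)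

theory Defs
  imports "HOL-Analysis.Analysis"
begin

text \<open>Mechanism BFM-SWM, modelled as a (nondeterministic) relational semantics.
  Nondeterminism only comes from tie-breaking in the two arg-max choices; the theorem
  quantifies over every possible run, i.e. over every tie-breaking rule.
  Sellers are truthful: a seller u offered price q accepts iff c u \<le> q.\<close>

definition marg :: "('a set \<Rightarrow> real) \<Rightarrow> 'a set \<Rightarrow> 'a set \<Rightarrow> real" where
  "marg v S T = v (S \<union> T) - v T"

definition normalized :: "('a set \<Rightarrow> real) \<Rightarrow> bool" where
  "normalized v \<longleftrightarrow> v {} = 0"

definition nonneg_on :: "'a set \<Rightarrow> ('a set \<Rightarrow> real) \<Rightarrow> bool" where
  "nonneg_on N v \<longleftrightarrow> (\<forall>S. S \<subseteq> N \<longrightarrow> v S \<ge> 0)"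

definition submodular_on :: "'a set \<Rightarrow> ('a set \<Rightarrow> real) \<Rightarrow> bool" where
  "submodular_on N v \<longleftrightarrow>
     (\<forall>X Y u. X \<subseteq> Y \<and> Y \<subseteq> N \<and> u \<in> N \<and> u \<notin> Y \<longrightarrow> marg v {u} Y \<le> marg v {u} X)"

text \<open>Arguments: valuation v, cost c, budget B, beta, ell,
  rho (= rho_t), the list of sellers still to be processed in this round,
  then the state before and after: (R, p, ustar, S), where S i is S_{i,t} for i in [ell].
  A round that ends early (ustar updated) stops processing the remaining list.\<close>
inductive bfm_round ::
  "('a set \<Rightarrow> real) \<Rightarrow> ('a \<Rightarrow> real) \<Rightarrow> real \<Rightarrow> real \<Rightarrow> nat \<Rightarrow> real \<Rightarrow> 'a list
   \<Rightarrow> 'a set \<Rightarrow> ('a \<Rightarrow> real) \<Rightarrow> 'a set \<Rightarrow> (nat \<Rightarrow> 'a set)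
   \<Rightarrow> 'a set \<Rightarrow> ('a \<Rightarrow> real) \<Rightarrow> 'a set \<Rightarrow> (nat \<Rightarrow> 'a set) \<Rightarrow> bool"
  for v c B \<beta> l \<rho> where
  nil: "bfm_round v c B \<beta> l \<rho> [] R p us S R p us S"
| accept_stop:
    "\<lbrakk> j \<in> {1..l}; \<forall>i\<in>{1..l}. marg v {u} (S i) \<le> marg v {u} (S j);
       q = min (p u) (marg v {u} (S j) / (\<beta> + \<rho> / B));
       c u \<le> q;
       v (S j \<union> {u}) - sum (p(u := q)) (S j \<union> {u}) > \<rho> \<rbrakk>
     \<Longrightarrow> bfm_round v c B \<beta> l \<rho> (u # us_list) R p us S R (p(u := q)) {u} S"
| accept_add:
    "\<lbrakk> j \<in> {1..l}; \<forall>i\<in>{1..l}. marg v {u} (S i) \<le> marg v {u} (S j);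
       q = min (p u) (marg v {u} (S j) / (\<beta> + \<rho> / B));
       c u \<le> q;
       \<not> (v (S j \<union> {u}) - sum (p(u := q)) (S j \<union> {u}) > \<rho>);
       bfm_round v c B \<beta> l \<rho> us_list R (p(u := q)) us (S(j := S j \<union> {u})) R' p' us' S' \<rbrakk>
     \<Longrightarrow> bfm_round v c B \<beta> l \<rho> (u # us_list) R p us S R' p' us' S'"
| reject:
    "\<lbrakk> j \<in> {1..l}; \<forall>i\<in>{1..l}. marg v {u} (S i) \<le> marg v {u} (S j);
       q = min (p u) (marg v {u} (S j) / (\<beta> + \<rho> / B));
       \<not> c u \<le> q;
       bfm_round v c B \<beta> l \<rho> us_list (R - {u}) (p(u := q)) us S R' p' us' S' \<rbrakk>
     \<Longrightarrow> bfm_round v c B \<beta> l \<rho> (u # us_list) R p us S R' p' us' S'"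

definition bfm_rho :: "real \<Rightarrow> real \<Rightarrow> nat \<Rightarrow> real" where
  "bfm_rho \<alpha> \<epsilon> t = (\<epsilon> / \<alpha>) * \<alpha> ^ t"

definition bfm_stop :: "nat \<Rightarrow> 'a set \<Rightarrow> 'a set \<Rightarrow> (nat \<Rightarrow> 'a set) \<Rightarrow> (nat \<Rightarrow> 'a set) \<Rightarrow> bool" where
  "bfm_stop l R us Sp Sc \<longleftrightarrow> R - ((\<Union>i\<in>{1..l}. Sp i \<union> Sc i) \<union> us) = {}"

text \<open>Reachable states after round t: (t, R, p, ustar, S_{.,t-1}, S_{.,t}).
  Arguments: ground set N, fixed processing order ord, v, c, B, alpha, beta, epsilon, ell.\<close>
inductive bfm_run ::
  "'a set \<Rightarrow> 'a list \<Rightarrow> ('a set \<Rightarrow> real) \<Rightarrow> ('a \<Rightarrow> real) \<Rightarrow> real \<Rightarrow> real \<Rightarrow> real \<Rightarrow> real \<Rightarrow> nat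
   \<Rightarrow> nat \<Rightarrow> 'a set \<Rightarrow> ('a \<Rightarrow> real) \<Rightarrow> 'a set \<Rightarrow> (nat \<Rightarrow> 'a set) \<Rightarrow> (nat \<Rightarrow> 'a set) \<Rightarrow> bool"
  for N ord v c B \<alpha> \<beta> \<epsilon> l where
  init: "bfm_run N ord v c B \<alpha> \<beta> \<epsilon> l 0 {u \<in> N. c u \<le> B} (\<lambda>_. B) {} (\<lambda>_. {}) (\<lambda>_. {})"
| step:
    "\<lbrakk> bfm_run N ord v c B \<alpha> \<beta> \<epsilon> l t R p us Sp Sc;
       t = 0 \<or> \<not> bfm_stop l R us Sp Sc;
       bfm_round v c B \<beta> l (bfm_rho \<alpha> \<epsilon> (Suc t))
         (filter (\<lambda>u. u \<in> R - ((\<Union>i\<in>{1..l}. Sc i) \<union> us)) ord)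
         R p us (\<lambda>_. {}) R' p' us' S' \<rbrakk>
     \<Longrightarrow> bfm_run N ord v c B \<alpha> \<beta> \<epsilon> l (Suc t) R' p' us' Sc S'"

text \<open>Possible outputs (S*, final prices p) of BFM-SWM; each u in S* is paid p u.\<close>
definition bfm_swm_output ::
  "'a set \<Rightarrow> 'a list \<Rightarrow> ('a set \<Rightarrow> real) \<Rightarrow> ('a \<Rightarrow> real) \<Rightarrow> real \<Rightarrow> real \<Rightarrow> real \<Rightarrow> real \<Rightarrow> nat
   \<Rightarrow> 'a set \<Rightarrow> ('a \<Rightarrow> real) \<Rightarrow> bool" where
  "bfm_swm_output N ord v c B \<alpha> \<beta> \<epsilon> l Sstar p \<longleftrightarrow>
     (\<exists>M R us Sp Sc. M \<ge> 1 \<and> bfm_run N ord v c B \<alpha> \<beta> \<epsilon> l M R p us Sp Sc \<and> bfm_stop l R us Sp Sc \<and>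
        (let Cand = {Sp i | i. i \<in> {1..l}} \<union> {Sc i | i. i \<in> {1..l}} \<union> {us} in
          Sstar \<in> Cand \<and> (\<forall>A\<in>Cand. v A - sum p A \<le> v Sstar - sum p Sstar)))"

end

theory Submission
  imports Defs
begin


lemma submodD:
  assumes "submodular_on N v" "X \<subseteq> Y" "Y \<subseteq> N" "u \<in> N" "u \<notin> Y"
  shows "v ({u} \<union> Y) - v Y \<le> v ({u} \<union> X) - v X"
  using assms unfolding submodular_on_def marg_def by blast

lemma submod_sum_aux:
  assumes "submodular_on N v" "S \<subseteq> N" "finite F"
  shows "F \<subseteq> N - S \<Longrightarrow> v (F \<union> S) \<le> v S + (\<Sum>w\<in>F. marg v {w} S)"
  using assms(3)
proof (induction F rule: finite_induct)
  case empty then show ?case by simp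
next
  case (insert x F)
  have "v (insert x F \<union> S) = v (F \<union> S) + (v ({x} \<union> (F \<union> S)) - v (F \<union> S))" by simp
  also have "v ({x} \<union> (F \<union> S)) - v (F \<union> S) \<le> v ({x} \<union> S) - v S"
    using submodD[OF assms(1), of S "F \<union> S" x] insert assms(2) by auto
  finally show ?case using insert by (simp add: marg_def)
qed

lemma submod_sum:
  assumes "submodular_on N v" "finite N" "S \<subseteq> N" "T \<subseteq> N"
  shows "v (T \<union> S) \<le> v S + (\<Sum>w\<in>T - S. marg v {w} S)"
proof -
  have "T \<union> S = (T - S) \<union> S" by blast
  moreover have "finite (T - S)" using assms by (meson finite_Diff finite_subset)
  ultimately show ?thesis using submod_sum_aux[OF assms(1,3), of "T - S"] assms by auto
qed

lemma submod_ui_aux: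
  assumes "submodular_on N v" "C \<subseteq> A" "A \<subseteq> N" "finite F"
  shows "F \<subseteq> N - A \<Longrightarrow> v (A \<union> F) - v A \<le> v (C \<union> F) - v C"
  using assms(4)
proof (induction F rule: finite_induct)
  case empty then show ?case by simp
next
  case (insert x F)
  have "v ({x} \<union> (A \<union> F)) - v (A \<union> F) \<le> v ({x} \<union> (C \<union> F)) - v (C \<union> F)"
    using submodD[OF assms(1), of "C \<union> F" "A \<union> F" x] insert assms(2,3) by auto
  moreover have "A \<union> insert x F = {x} \<union> (A \<union> F)" "C \<union> insert x F = {x} \<union> (C \<union> F)" by auto
  ultimately show ?case using insert by simp
qed

lemma submod_union_inter:
  assumes "submodular_on N v" "finite N" "A \<subseteq> N" "B \<subseteq> N"
  shows "v (A \<union> B) + v (A \<inter> B) \<le> v A + v B"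
proof -
  have f: "finite (B - A)" using assms by (meson finite_Diff finite_subset)
  have "v (A \<union> (B - A)) - v A \<le> v ((A \<inter> B) \<union> (B - A)) - v (A \<inter> B)"
    using submod_ui_aux[OF assms(1) _ assms(3) f, of "A \<inter> B"] assms by auto
  moreover have "A \<union> (B - A) = A \<union> B" "(A \<inter> B) \<union> (B - A) = B" by auto
  ultimately show ?thesis by simp
qed

lemma subadd:
  assumes "submodular_on N v" "finite N" "nonneg_on N v" "A \<subseteq> N" "B \<subseteq> N"
  shows "v (A \<union> B) \<le> v A + v B"
proof -
  have "v (A \<inter> B) \<ge> 0" using assms(3,4) unfolding nonneg_on_def by (meson inf.coboundedI1)
  then show ?thesis using submod_union_inter[OF assms(1,2,4,5)] by linarith
qed

lemma marg_single_le:
  assumes "submodular_on N v" "normalized v" "S \<subseteq> N" "u \<in> N" "u \<notin> S"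
  shows "marg v {u} S \<le> v {u}"
  using submodD[OF assms(1), of "{}" S u] assms unfolding marg_def normalized_def by auto

definition good :: "'a set \<Rightarrow> ('a set \<Rightarrow> real) \<Rightarrow> ('a \<Rightarrow> real) \<Rightarrow> 'a set \<Rightarrow> 'a set \<Rightarrow> 'a set \<Rightarrow> real \<Rightarrow> bool" where
  "good N v c S1 S2 Rj x \<longleftrightarrow> S1 \<inter> S2 = {} \<and> S1 \<subseteq> N \<and> S2 \<subseteq> N \<and> Rj \<subseteq> N \<and>
     (\<forall>w\<in>Rj. w \<notin> S1 \<and> w \<notin> S2 \<and> marg v {w} S1 \<le> x * c w \<and> marg v {w} S2 \<le> x * c w) \<and>
     (\<Sum>w\<in>S1. max 0 (marg v {w} S2)) \<le> v S1 \<and> (\<Sum>w\<in>S2. max 0 (marg v {w} S1)) \<le> v S2"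

lemma good_half:
  assumes "submodular_on N v" "finite N" "\<forall>u\<in>N. c u \<ge> 0" "x \<ge> 0"
    and "S1 \<inter> S2 = {}" "S1 \<subseteq> N" "S2 \<subseteq> N" "Rj \<subseteq> N"
    and "\<forall>w\<in>Rj. w \<notin> S1 \<and> marg v {w} S1 \<le> x * c w"
    and "(\<Sum>w\<in>S2. max 0 (marg v {w} S1)) \<le> v S2"
    and "T \<subseteq> Rj \<union> S1 \<union> S2"
  shows "v (T \<union> S1) \<le> v S1 + x * sum c (T \<inter> Rj) + (if T \<inter> S2 = {} then 0 else v S2)"
proof -
  have TN: "T \<subseteq> N" using assms by blast
  have fin: "finite T" "finite S2" "finite Rj" using TN assms(2,7,8) finite_subset by blast+
  have "v (T \<union> S1) \<le> v S1 + (\<Sum>w\<in>T - S1. marg v {w} S1)"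
    using submod_sum[OF assms(1,2,6) TN] .
  also have "(\<Sum>w\<in>T - S1. marg v {w} S1) \<le> (\<Sum>w\<in>T - S1. max 0 (marg v {w} S1))"
    by (rule sum_mono) simp
  also have "T - S1 = (T \<inter> Rj - S1) \<union> (T \<inter> S2 - Rj)" using assms(5,11) by blast
  also have "(\<Sum>w\<in>(T \<inter> Rj - S1) \<union> (T \<inter> S2 - Rj). max 0 (marg v {w} S1))
     = (\<Sum>w\<in>T \<inter> Rj - S1. max 0 (marg v {w} S1)) + (\<Sum>w\<in>T \<inter> S2 - Rj. max 0 (marg v {w} S1))"
    by (rule sum.union_disjoint) (use fin in auto)
  also have "(\<Sum>w\<in>T \<inter> Rj - S1. max 0 (marg v {w} S1)) \<le> (\<Sum>w\<in>T \<inter> Rj - S1. x * c w)"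
    apply (rule sum_mono) using assms(3,4,8,9) by (auto intro: mult_nonneg_nonneg)
  also have "(\<Sum>w\<in>T \<inter> Rj - S1. x * c w) = x * sum c (T \<inter> Rj)"
  proof -
    have "T \<inter> Rj - S1 = T \<inter> Rj" using assms(9) by blast
    then show ?thesis by (simp add: sum_distrib_left)
  qed
  also have "(\<Sum>w\<in>T \<inter> S2 - Rj. max 0 (marg v {w} S1)) \<le> (if T \<inter> S2 = {} then 0 else v S2)"
  proof (cases "T \<inter> S2 = {}")
    case True then show ?thesis by simp
  next
    case False
    have "(\<Sum>w\<in>T \<inter> S2 - Rj. max 0 (marg v {w} S1)) \<le> (\<Sum>w\<in>S2. max 0 (marg v {w} S1))"
      by (rule sum_mono2) (use fin in auto)
    then show ?thesis using False assms(10) by simp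
  qed
  finally show ?thesis by simp
qed

lemma good_two:
  assumes "submodular_on N v" "finite N" "nonneg_on N v" "\<forall>u\<in>N. c u \<ge> 0" "x \<ge> 0"
    and "good N v c S1 S2 Rj x" "T \<subseteq> Rj \<union> S1 \<union> S2"
  shows "v T \<le> v S1 + v S2 + 2 * x * sum c (T \<inter> Rj)
     + (if T \<inter> S2 = {} then 0 else v S2) + (if T \<inter> S1 = {} then 0 else v S1)"
proof -
  have g: "S1 \<inter> S2 = {}" "S1 \<subseteq> N" "S2 \<subseteq> N" "Rj \<subseteq> N"
    "\<forall>w\<in>Rj. w \<notin> S1 \<and> marg v {w} S1 \<le> x * c w"
    "\<forall>w\<in>Rj. w \<notin> S2 \<and> marg v {w} S2 \<le> x * c w"
    "(\<Sum>w\<in>S1. max 0 (marg v {w} S2)) \<le> v S1" "(\<Sum>w\<in>S2. max 0 (marg v {w} S1)) \<le> v S2"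
    using assms(6) unfolding good_def by auto
  have TN: "T \<subseteq> N" using assms(7) g by blast
  have "v ((T \<union> S1) \<union> (T \<union> S2)) + v ((T \<union> S1) \<inter> (T \<union> S2)) \<le> v (T \<union> S1) + v (T \<union> S2)"
    by (rule submod_union_inter[OF assms(1,2)]) (use TN g in auto)
  moreover have "(T \<union> S1) \<inter> (T \<union> S2) = T" using g(1) by blast
  moreover have "v ((T \<union> S1) \<union> (T \<union> S2)) \<ge> 0" using assms(3) TN g unfolding nonneg_on_def by auto
  ultimately have "v T \<le> v (T \<union> S1) + v (T \<union> S2)" by simp
  moreover have "v (T \<union> S1) \<le> v S1 + x * sum c (T \<inter> Rj) + (if T \<inter> S2 = {} then 0 else v S2)"
    by (rule good_half[OF assms(1,2,4,5) g(1-5,8) assms(7)])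
  moreover have "v (T \<union> S2) \<le> v S2 + x * sum c (T \<inter> Rj) + (if T \<inter> S1 = {} then 0 else v S1)"
    by (rule good_half[OF assms(1,2,4,5) _ g(3,2,4,6,7)]) (use g(1) assms(7) in auto)
  ultimately show ?thesis by simp
qed

lemma group_bound:
  assumes "submodular_on N v" "finite N" "nonneg_on N v" "\<forall>u\<in>N. c u \<ge> 0" "x \<ge> 0"
    and "good N v c S1 S2 Rj x" "T \<subseteq> Rj \<union> S1 \<union> S2"
  shows "v T \<le> 2 * (v S1 + v S2) + 2 * x * sum c (T \<inter> Rj)"
proof -
  have "S1 \<subseteq> N" "S2 \<subseteq> N" using assms(6) unfolding good_def by auto
  then have "v S1 \<ge> 0" "v S2 \<ge> 0" using assms(3) unfolding nonneg_on_def by auto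
  then show ?thesis using good_two[OF assms] by (simp split: if_splits)
qed

lemma group_rej:
  assumes "submodular_on N v" "finite N" "nonneg_on N v" "\<forall>u\<in>N. c u \<ge> 0" "x \<ge> 0"
    and "good N v c S1 S2 Rj x" "T \<subseteq> Rj"
  shows "v T \<le> v S1 + v S2 + 2 * x * sum c T"
proof -
  have "T \<inter> S1 = {}" "T \<inter> S2 = {}" "T \<inter> Rj = T" using assms(6,7) unfolding good_def by auto
  then show ?thesis using good_two[OF assms(1-6), of T] assms(7) by auto
qed



lemma good_sym: "good N v c S1 S2 Rj x \<longleftrightarrow> good N v c S2 S1 Rj x"
  unfolding good_def by blast

lemma good_empty: "normalized v \<Longrightarrow> good N v c {} {} {} x"
  unfolding good_def normalized_def by auto

lemma good_add1:
  assumes "submodular_on N v" "finite N" "good N v c S1 S2 Rj x"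
    and "u \<in> N" "u \<notin> S1" "u \<notin> S2" "u \<notin> Rj"
    and "marg v {u} S2 \<le> marg v {u} S1" "0 \<le> marg v {u} S1"
  shows "good N v c (S1 \<union> {u}) S2 Rj x"
proof -
  have g: "S1 \<inter> S2 = {}" "S1 \<subseteq> N" "S2 \<subseteq> N" "Rj \<subseteq> N"
    "\<forall>w\<in>Rj. w \<notin> S1 \<and> w \<notin> S2 \<and> marg v {w} S1 \<le> x * c w \<and> marg v {w} S2 \<le> x * c w"
    "(\<Sum>w\<in>S1. max 0 (marg v {w} S2)) \<le> v S1" "(\<Sum>w\<in>S2. max 0 (marg v {w} S1)) \<le> v S2"
    using assms(3) unfolding good_def by auto
  have fin: "finite S1" "finite S2" using g assms(2) finite_subset by blast+
  have r: "\<forall>w\<in>Rj. w \<notin> S1 \<union> {u} \<and> w \<notin> S2 \<and> marg v {w} (S1 \<union> {u}) \<le> x * c w \<and> marg v {w} S2 \<le> x * c w"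
  proof
    fix w assume w: "w \<in> Rj"
    then have "w \<noteq> u" using assms(7) by auto
    then have "marg v {w} (S1 \<union> {u}) \<le> marg v {w} S1"
      using submodD[OF assms(1), of S1 "S1 \<union> {u}" w] w g assms(4) unfolding marg_def by auto
    then show "w \<notin> S1 \<union> {u} \<and> w \<notin> S2 \<and> marg v {w} (S1 \<union> {u}) \<le> x * c w \<and> marg v {w} S2 \<le> x * c w"
      using g(5) w \<open>w \<noteq> u\<close> by fastforce
  qed
  have s1: "(\<Sum>w\<in>S1 \<union> {u}. max 0 (marg v {w} S2)) \<le> v (S1 \<union> {u})"
  proof -
    have "(\<Sum>w\<in>S1 \<union> {u}. max 0 (marg v {w} S2)) = (\<Sum>w\<in>S1. max 0 (marg v {w} S2)) + max 0 (marg v {u} S2)"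
      using fin assms(5) by simp
    also have "\<dots> \<le> v S1 + marg v {u} S1" using g(6) assms(8,9) by simp
    also have "\<dots> = v (S1 \<union> {u})" unfolding marg_def by (simp add: Un_commute)
    finally show ?thesis .
  qed
  have s2: "(\<Sum>w\<in>S2. max 0 (marg v {w} (S1 \<union> {u}))) \<le> v S2"
  proof -
    have "(\<Sum>w\<in>S2. max 0 (marg v {w} (S1 \<union> {u}))) \<le> (\<Sum>w\<in>S2. max 0 (marg v {w} S1))"
    proof (rule sum_mono)
      fix w assume w: "w \<in> S2"
      then have "w \<notin> S1 \<union> {u}" using g(1) assms(6) by auto
      then have "marg v {w} (S1 \<union> {u}) \<le> marg v {w} S1"
        using submodD[OF assms(1), of S1 "S1 \<union> {u}" w] w g assms(4) unfolding marg_def by auto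
      then show "max 0 (marg v {w} (S1 \<union> {u})) \<le> max 0 (marg v {w} S1)" by simp
    qed
    then show ?thesis using g(7) by simp
  qed
  show ?thesis unfolding good_def using g r s1 s2 assms(4,6) by blast
qed

lemma good_rej:
  assumes "good N v c S1 S2 Rj x" "u \<in> N" "u \<notin> S1" "u \<notin> S2"
    and "marg v {u} S1 \<le> x * c u" "marg v {u} S2 \<le> x * c u"
  shows "good N v c S1 S2 (insert u Rj) x"
  using assms unfolding good_def by auto



definition round_concl :: "'a set \<Rightarrow> ('a set \<Rightarrow> real) \<Rightarrow> ('a \<Rightarrow> real) \<Rightarrow> real \<Rightarrow> real \<Rightarrow> 'a list \<Rightarrow> 'a set \<Rightarrow> 'a set \<Rightarrow> ('a \<Rightarrow> real) \<Rightarrow> 'a set \<Rightarrow> (nat \<Rightarrow> 'a set) \<Rightarrow> 'a set \<Rightarrow> ('a \<Rightarrow> real) \<Rightarrow> 'a set \<Rightarrow> (nat \<Rightarrow> 'a set) \<Rightarrow> bool" where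
  "round_concl N v c x \<rho> xs Rr R p us S R' p' us' S' \<longleftrightarrow>
     R' \<subseteq> R \<and> R - R' \<subseteq> set xs \<and> good N v c (S' 1) (S' 2) (Rr - R') x \<and> (\<forall>u\<in>R'. c u \<le> p' u) \<and>
     S' 1 \<subseteq> R' \<and> S' 2 \<subseteq> R' \<and> S' 1 \<subseteq> S 1 \<union> set xs \<and> S' 2 \<subseteq> S 2 \<union> set xs \<and>
     S 1 \<subseteq> S' 1 \<and> S 2 \<subseteq> S' 2 \<and>
     (\<forall>i\<in>{1,2}. 4 * sum p' (S' i) \<le> v (S' i) \<and> v (S' i) - sum p' (S' i) \<le> \<rho>) \<and>
     (\<forall>u. u \<notin> set xs \<longrightarrow> p' u = p u) \<and>
     ((us' = us \<and> set xs \<subseteq> S' 1 \<union> S' 2 \<union> (R - R')) \<or>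
      (\<exists>u\<in>set xs. us' = {u} \<and> u \<in> R' \<and> 4 * p' u \<le> v {u} \<and>
          (\<exists>j\<in>{1,2}. v (S' j) - sum p' (S' j) + (v {u} - p' u) > \<rho>)))"

lemma round_inv:
  assumes fin: "finite N" and sm: "submodular_on N v" and nn: "nonneg_on N v" and nz: "normalized v"
    and cn: "\<forall>u\<in>N. c u \<ge> 0" and Bp: "B > 0" and rp: "\<rho> > 0"
  shows "bfm_round v c B 4 2 \<rho> xs R p us S R' p' us' S' \<Longrightarrow> distinct xs \<Longrightarrow> set xs \<subseteq> R \<Longrightarrow> R \<subseteq> Rr \<Longrightarrow> Rr \<subseteq> N
    \<Longrightarrow> set xs \<inter> (S 1 \<union> S 2) = {} \<Longrightarrow> good N v c (S 1) (S 2) (Rr - R) (4 + \<rho> / B)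
    \<Longrightarrow> \<forall>u\<in>R. c u \<le> p u \<Longrightarrow> S 1 \<subseteq> R \<Longrightarrow> S 2 \<subseteq> R
    \<Longrightarrow> (\<forall>i\<in>{1,2}. 4 * sum p (S i) \<le> v (S i) \<and> v (S i) - sum p (S i) \<le> \<rho>)
    \<Longrightarrow> round_concl N v c (4 + \<rho> / B) \<rho> xs Rr R p us S R' p' us' S'"
proof (induction rule: bfm_round.induct)
  case (nil R p us S)
  then show ?case unfolding round_concl_def by auto
next
  case (accept_stop j u S q p us_list R us)
  let ?x = "4 + \<rho> / B"
  have x4: "?x \<ge> 4" using Bp rp by simp
  have uR: "u \<in> R" and uN: "u \<in> N" and uS1: "u \<notin> S 1" and uS2: "u \<notin> S 2"
    using accept_stop by auto
  have j12: "j = 1 \<or> j = 2" using accept_stop.hyps(1) by auto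
  have uSj: "u \<notin> S j" using j12 uS1 uS2 by auto
  have SjN: "S j \<subseteq> N" using j12 accept_stop by auto
  have finSj: "finite (S j)" using SjN fin finite_subset by blast
  have cu: "c u \<ge> 0" using cn uN by auto
  have qx: "q \<le> marg v {u} (S j) / ?x" using accept_stop.hyps(3) by simp
  then have xq: "?x * q \<le> marg v {u} (S j)" using x4 by (simp add: field_simps)
  have q0: "q \<ge> 0" using accept_stop.hyps(4) cu by linarith
  have mv: "marg v {u} (S j) \<le> v {u}" using marg_single_le[OF sm nz SjN uN uSj] .
  have q4: "4 * q \<le> v {u}"
  proof -
    have "4 * q \<le> ?x * q" using x4 q0 by (intro mult_right_mono) auto
    then show ?thesis using xq mv by linarith
  qed
  have sumSj: "sum (p(u := q)) (S j \<union> {u}) = sum (p(u := q)) (S j) + q"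
    using finSj uSj by simp
  have vSj: "v (S j \<union> {u}) \<le> v (S j) + v {u}"
    using mv unfolding marg_def by (simp add: Un_commute)
  have early: "v (S j) - sum (p(u := q)) (S j) + (v {u} - (p(u := q)) u) > \<rho>"
    using accept_stop.hyps(5) sumSj vSj by simp
  have pS: "\<forall>i\<in>{1,2}. sum (p(u := q)) (S i) = sum p (S i)"
    using uS1 uS2 by (auto intro!: sum.cong)
  show ?case unfolding round_concl_def
    using accept_stop.hyps(4) accept_stop.prems uR q4 early j12 pS
    by (auto simp: Diff_subset)
next
  case (accept_add j u S q p us_list R us R' p' us' S')
  let ?x = "4 + \<rho> / B"
  let ?S2 = "S(j := S j \<union> {u})"
  have x4: "?x \<ge> 4" using Bp rp by simp
  have uR: "u \<in> R" and uN: "u \<in> N" and uS1: "u \<notin> S 1" and uS2: "u \<notin> S 2"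
    using accept_add by auto
  have j12: "j = 1 \<or> j = 2" using accept_add.hyps(1) by auto
  have uSj: "u \<notin> S j" using j12 uS1 uS2 by auto
  have SjN: "S j \<subseteq> N" using j12 accept_add by auto
  have finSj: "finite (S j)" using SjN fin finite_subset by blast
  have cu: "c u \<ge> 0" using cn uN by auto
  have qx: "q \<le> marg v {u} (S j) / ?x" using accept_add.hyps(3) by simp
  then have xq: "?x * q \<le> marg v {u} (S j)" using x4 by (simp add: field_simps)
  have q0: "q \<ge> 0" using accept_add.hyps(4) cu by linarith
  have m0: "marg v {u} (S j) \<ge> 0" using xq q0 x4 by (smt (verit) mult_nonneg_nonneg)
  have q4: "4 * q \<le> marg v {u} (S j)"
  proof -
    have "4 * q \<le> ?x * q" using x4 q0 by (intro mult_right_mono) auto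
    then show ?thesis using xq by linarith
  qed
  have uRr: "u \<notin> Rr - R" using uR by auto
  have good2: "good N v c (?S2 1) (?S2 2) (Rr - R) ?x"
  proof (cases "j = 1")
    case True
    have "good N v c (S 1 \<union> {u}) (S 2) (Rr - R) ?x"
      by (rule good_add1[OF sm fin accept_add.prems(6) uN uS1 uS2 uRr])
         (use accept_add.hyps(2) True m0 in auto)
    then show ?thesis using True by simp
  next
    case False
    then have j2: "j = 2" using j12 by simp
    have gs: "good N v c (S 2) (S 1) (Rr - R) ?x" using accept_add.prems(6) good_sym by blast
    have "good N v c (S 2 \<union> {u}) (S 1) (Rr - R) ?x"
      by (rule good_add1[OF sm fin gs uN uS2 uS1 uRr])
         (use accept_add.hyps(2) j2 m0 in auto)
    then show ?thesis using j2 good_sym by fastforce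
  qed
  have pS: "\<forall>i\<in>{1,2}. i \<noteq> j \<longrightarrow> sum (p(u := q)) (S i) = sum p (S i)"
    using uS1 uS2 by (auto intro!: sum.cong)
  have sumSj: "sum (p(u := q)) (S j \<union> {u}) = sum p (S j) + q"
  proof -
    have "sum (p(u := q)) (S j) = sum p (S j)" using uSj by (auto intro!: sum.cong)
    then show ?thesis using finSj uSj by simp
  qed
  have vSj: "v (S j \<union> {u}) = v (S j) + marg v {u} (S j)"
    unfolding marg_def by (simp add: Un_commute)
  have price2: "\<forall>i\<in>{1,2}. 4 * sum (p(u := q)) (?S2 i) \<le> v (?S2 i) \<and> v (?S2 i) - sum (p(u := q)) (?S2 i) \<le> \<rho>"
  proof
    fix i assume i: "i \<in> {1::nat,2}"
    show "4 * sum (p(u := q)) (?S2 i) \<le> v (?S2 i) \<and> v (?S2 i) - sum (p(u := q)) (?S2 i) \<le> \<rho>"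
    proof (cases "i = j")
      case True
      have "4 * sum p (S j) \<le> v (S j)" using accept_add.prems(10) j12 by auto
      then show ?thesis using True sumSj vSj q4 accept_add.hyps(5) by auto
    next
      case False
      then show ?thesis using pS i accept_add.prems(10) by auto
    qed
  qed
  have IH: "round_concl N v c ?x \<rho> us_list Rr R (p(u := q)) us ?S2 R' p' us' S'"
  proof (rule accept_add.IH)
    show "distinct us_list" using accept_add.prems(1) by simp
    show "set us_list \<subseteq> R" using accept_add.prems(2) by simp
    show "R \<subseteq> Rr" "Rr \<subseteq> N" by fact+
    show "set us_list \<inter> (?S2 1 \<union> ?S2 2) = {}" using accept_add.prems(1) accept_add.prems(5) by auto
    show "good N v c (?S2 1) (?S2 2) (Rr - R) ?x" by (rule good2)
    show "\<forall>w\<in>R. c w \<le> (p(u := q)) w" using accept_add.hyps(4) accept_add.prems(7) by auto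
    show "?S2 1 \<subseteq> R" "?S2 2 \<subseteq> R" using accept_add.prems(8) accept_add.prems(9) uR by auto
    show "\<forall>i\<in>{1,2}. 4 * sum (p(u := q)) (?S2 i) \<le> v (?S2 i) \<and> v (?S2 i) - sum (p(u := q)) (?S2 i) \<le> \<rho>"
      by (rule price2)
  qed
  have uS': "u \<in> S' j" using IH j12 unfolding round_concl_def by auto
  show ?case using IH uS' j12 unfolding round_concl_def
    by (auto split: if_splits)
next
  case (reject j u S q p us_list R us R' p' us' S')
  let ?x = "4 + \<rho> / B"
  have x4: "?x \<ge> 4" using Bp rp by simp
  have uR: "u \<in> R" and uN: "u \<in> N" and uS1: "u \<notin> S 1" and uS2: "u \<notin> S 2"
    using reject by auto
  have j12: "j = 1 \<or> j = 2" using reject.hyps(1) by auto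
  have cp: "c u \<le> p u" using reject.prems(7) uR by auto
  have "q = marg v {u} (S j) / ?x" using reject.hyps(3) reject.hyps(4) cp by (auto simp: min_def split: if_splits)
  then have "marg v {u} (S j) = ?x * q" using x4 by (simp add: field_simps)
  moreover have "?x * q < ?x * c u" using reject.hyps(4) x4 by (intro mult_strict_left_mono) auto
  ultimately have "marg v {u} (S j) < ?x * c u" by simp
  then have mb: "marg v {u} (S 1) \<le> ?x * c u" "marg v {u} (S 2) \<le> ?x * c u"
  proof -
    have "marg v {u} (S 1) \<le> marg v {u} (S j)" "marg v {u} (S 2) \<le> marg v {u} (S j)"
      using reject.hyps(2) by auto
    then show "marg v {u} (S 1) \<le> ?x * c u" "marg v {u} (S 2) \<le> ?x * c u"
      using \<open>marg v {u} (S j) < ?x * c u\<close> by linarith+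
  qed
  have eqR: "Rr - (R - {u}) = insert u (Rr - R)" using uR reject.prems(3) by auto
  have good2: "good N v c (S 1) (S 2) (Rr - (R - {u})) ?x"
    unfolding eqR by (rule good_rej[OF reject.prems(6) uN uS1 uS2 mb])
  have pS: "\<forall>i\<in>{1,2}. sum (p(u := q)) (S i) = sum p (S i)"
    using uS1 uS2 by (auto intro!: sum.cong)
  have IH: "round_concl N v c ?x \<rho> us_list Rr (R - {u}) (p(u := q)) us S R' p' us' S'"
  proof (rule reject.IH)
    show "distinct us_list" using reject.prems(1) by simp
    show "set us_list \<subseteq> R - {u}" using reject.prems(1) reject.prems(2) by auto
    show "R - {u} \<subseteq> Rr" "Rr \<subseteq> N" using reject.prems(3) reject.prems(4) by auto
    show "set us_list \<inter> (S 1 \<union> S 2) = {}" using reject.prems(5) by auto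
    show "good N v c (S 1) (S 2) (Rr - (R - {u})) ?x" by (rule good2)
    show "\<forall>w\<in>R - {u}. c w \<le> (p(u := q)) w" using reject.prems(7) by auto
    show "S 1 \<subseteq> R - {u}" "S 2 \<subseteq> R - {u}" using reject.prems(8) reject.prems(9) uS1 uS2 by auto
    show "\<forall>i\<in>{1,2}. 4 * sum (p(u := q)) (S i) \<le> v (S i) \<and> v (S i) - sum (p(u := q)) (S i) \<le> \<rho>"
      using pS reject.prems(10) by auto
  qed
  show ?case using IH uR unfolding round_concl_def
    by (auto split: if_splits)
qed



lemma rho_suc: "\<alpha> \<noteq> 0 \<Longrightarrow> bfm_rho \<alpha> \<epsilon> (Suc t) / \<alpha> = bfm_rho \<alpha> \<epsilon> t"
  unfolding bfm_rho_def by (simp add: field_simps)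

lemma rho_pos: "\<alpha> > 0 \<Longrightarrow> \<epsilon> > 0 \<Longrightarrow> bfm_rho \<alpha> \<epsilon> t > 0"
  unfolding bfm_rho_def by simp

lemma rho_one: "\<alpha> \<noteq> 0 \<Longrightarrow> bfm_rho \<alpha> \<epsilon> (Suc 0) = \<epsilon>"
  unfolding bfm_rho_def by simp

lemma two_set: "{1..2::nat} = {1,2}" by auto

lemma old_arith:
  fixes \<alpha> y B c1 c2 a b s1 s2 :: real
  assumes "\<alpha> > 1" "y \<ge> 0" "B > 0" "c1 \<ge> 0" "c2 \<ge> 0"
    and "a \<le> 8 / (3 * (\<alpha> - 1)) * y + 2 * (4 + y / B) * c1"
    and "b \<le> s1 + s2 + 2 * (4 + y / B) * c2"
    and "s1 \<le> 4 / 3 * y" "s2 \<le> 4 / 3 * y"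
  shows "a + b \<le> 8 / (3 * (\<alpha> - 1)) * (\<alpha> * y) + 2 * (4 + (\<alpha> * y) / B) * (c1 + c2)"
proof -
  have e: "8 / (3 * (\<alpha> - 1)) * y + 8 / 3 * y = 8 / (3 * (\<alpha> - 1)) * (\<alpha> * y)"
    using assms(1) by (simp add: field_simps)
  have "y / B \<le> (\<alpha> * y) / B" using assms(1-3) by (simp add: divide_right_mono mult_le_cancel_right1)
  then have "2 * (4 + y / B) * (c1 + c2) \<le> 2 * (4 + (\<alpha> * y) / B) * (c1 + c2)"
    using assms(4,5) by (intro mult_right_mono) auto
  moreover have "2 * (4 + y / B) * c1 + 2 * (4 + y / B) * c2 = 2 * (4 + y / B) * (c1 + c2)"
    by (simp add: distrib_left)
  ultimately show ?thesis using assms(6-9) e by linarith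
qed

lemma v_le_price:
  fixes a b y :: real
  assumes "4 * b \<le> a" "a - b \<le> y" shows "a \<le> 4 / 3 * y"
  using assms by linarith

definition run_concl :: "'a set \<Rightarrow> ('a set \<Rightarrow> real) \<Rightarrow> ('a \<Rightarrow> real) \<Rightarrow> real \<Rightarrow> real \<Rightarrow> real \<Rightarrow> nat \<Rightarrow> 'a set \<Rightarrow> ('a \<Rightarrow> real) \<Rightarrow> 'a set \<Rightarrow> (nat \<Rightarrow> 'a set) \<Rightarrow> (nat \<Rightarrow> 'a set) \<Rightarrow> bool" where
  "run_concl N v c B \<alpha> \<epsilon> t R p us Sp Sc \<longleftrightarrow>
    R \<subseteq> {u \<in> N. c u \<le> B} \<and> (\<forall>u\<in>R. c u \<le> p u) \<and> Sp 1 \<subseteq> R \<and> Sp 2 \<subseteq> R \<and> Sc 1 \<subseteq> R \<and> Sc 2 \<subseteq> R \<and> us \<subseteq> R \<and>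
    (us = {} \<or> (\<exists>u. us = {u} \<and> 4 * p u \<le> v {u})) \<and>
    (\<forall>i\<in>{1,2}. 4 * sum p (Sp i) \<le> v (Sp i) \<and> v (Sp i) - sum p (Sp i) \<le> bfm_rho \<alpha> \<epsilon> t / \<alpha> \<and>
                4 * sum p (Sc i) \<le> v (Sc i) \<and> v (Sc i) - sum p (Sc i) \<le> bfm_rho \<alpha> \<epsilon> t) \<and>
    (\<exists>Old Rp Rc. {u \<in> N. c u \<le> B} - R \<subseteq> Old \<union> Rp \<union> Rc \<and> Old \<subseteq> N \<and>
        good N v c (Sp 1) (Sp 2) Rp (4 + (bfm_rho \<alpha> \<epsilon> t / \<alpha>) / B) \<and>
        good N v c (Sc 1) (Sc 2) Rc (4 + bfm_rho \<alpha> \<epsilon> t / B) \<and>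
        (\<forall>T\<subseteq>Old. v T \<le> 8 / (3 * (\<alpha> - 1)) * (bfm_rho \<alpha> \<epsilon> t / \<alpha>) + 2 * (4 + (bfm_rho \<alpha> \<epsilon> t / \<alpha>) / B) * sum c T)) \<and>
    (t \<ge> 1 \<longrightarrow> (\<exists>j\<in>{1,2}. v (Sc j) - sum p (Sc j) + (v us - sum p us) > bfm_rho \<alpha> \<epsilon> t) \<or>
       (bfm_stop 2 R us Sp Sc \<and> (t \<ge> 2 \<longrightarrow> (\<exists>j\<in>{1,2}. v (Sp j) - sum p (Sp j) + (v us - sum p us) > bfm_rho \<alpha> \<epsilon> t / \<alpha>))))"

lemma run_init:
  assumes "normalized v" "\<alpha> > 1" "\<epsilon> > 0" "B > 0"
  shows "run_concl N v c B \<alpha> \<epsilon> 0 {u \<in> N. c u \<le> B} (\<lambda>_. B) {} (\<lambda>_. {}) (\<lambda>_. {})"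
proof -
  have r: "bfm_rho \<alpha> \<epsilon> 0 > 0" using rho_pos assms by simp
  have "8 / (3 * (\<alpha> - 1)) * (bfm_rho \<alpha> \<epsilon> 0 / \<alpha>) \<ge> 0" using r assms(2) by simp
  then show ?thesis unfolding run_concl_def
    using assms(1) r assms(2) good_empty[OF assms(1)] by (auto simp: normalized_def intro!: exI[of _ "{}"])
qed



lemma sum_off:
  assumes "\<forall>u. u \<notin> X \<longrightarrow> p' u = p u" "A \<inter> X = {}"
  shows "sum p' A = sum p A"
  using assms by (intro sum.cong) auto

lemma run_step:
  assumes fin: "finite N" and sm: "submodular_on N v" and nn: "nonneg_on N v" and nz: "normalized v"
    and cn: "\<forall>u\<in>N. c u \<ge> 0" and Bp: "B > 0" and ep: "\<epsilon> > 0" and al: "\<alpha> > 1"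
    and ordN: "set ord = N" and dist: "distinct ord"
    and IH: "run_concl N v c B \<alpha> \<epsilon> t R p us Sp Sc"
    and sc: "t = 0 \<or> \<not> bfm_stop 2 R us Sp Sc"
    and rd: "bfm_round v c B 4 2 (bfm_rho \<alpha> \<epsilon> (Suc t))
         (filter (\<lambda>u. u \<in> R - ((\<Union>i\<in>{1..2}. Sc i) \<union> us)) ord) R p us (\<lambda>_. {}) R' p' us' S'"
  shows "run_concl N v c B \<alpha> \<epsilon> (Suc t) R' p' us' Sc S'"
proof -
  define xs where "xs = filter (\<lambda>u. u \<in> R - ((\<Union>i\<in>{1..2}. Sc i) \<union> us)) ord"
  define \<rho>' where "\<rho>' = bfm_rho \<alpha> \<epsilon> (Suc t)"
  define r where "r = bfm_rho \<alpha> \<epsilon> t"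
  define R0 where "R0 = {u \<in> N. c u \<le> B}"
  define K where "K = 8 / (3 * (\<alpha> - 1))"
  have rr: "\<rho>' / \<alpha> = r" unfolding \<rho>'_def r_def using rho_suc al by simp
  have rpos: "r > 0" "\<rho>' > 0" unfolding r_def \<rho>'_def using rho_pos al ep by auto
  have Kpos: "K \<ge> 0" unfolding K_def using al by simp
  have rr2: "\<rho>' = \<alpha> * r" using rr al by (simp add: field_simps)
  have I1a: "R \<subseteq> R0" using IH unfolding run_concl_def R0_def r_def by (elim conjE) assumption
  have I1b: "\<forall>u\<in>R. c u \<le> p u" using IH unfolding run_concl_def R0_def r_def by (elim conjE) assumption
  have I1c: "Sp 1 \<subseteq> R" using IH unfolding run_concl_def R0_def r_def by (elim conjE) assumption
  have I1d: "Sp 2 \<subseteq> R" using IH unfolding run_concl_def R0_def r_def by (elim conjE) assumption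
  have I1e: "Sc 1 \<subseteq> R" using IH unfolding run_concl_def R0_def r_def by (elim conjE) assumption
  have I1f: "Sc 2 \<subseteq> R" using IH unfolding run_concl_def R0_def r_def by (elim conjE) assumption
  have I1g: "us \<subseteq> R" using IH unfolding run_concl_def R0_def r_def by (elim conjE) assumption
  note I1 = I1a I1b I1c I1d I1e I1f I1g
  have I2: "us = {} \<or> (\<exists>u. us = {u} \<and> 4 * p u \<le> v {u})" using IH unfolding run_concl_def R0_def r_def by (elim conjE) assumption
  have I3: "\<forall>i\<in>{1,2}. 4 * sum p (Sp i) \<le> v (Sp i) \<and> v (Sp i) - sum p (Sp i) \<le> r / \<alpha> \<and>
                4 * sum p (Sc i) \<le> v (Sc i) \<and> v (Sc i) - sum p (Sc i) \<le> r" using IH unfolding run_concl_def R0_def r_def by (elim conjE) assumption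
  have I5: "t \<ge> 1 \<longrightarrow> (\<exists>j\<in>{1,2}. v (Sc j) - sum p (Sc j) + (v us - sum p us) > r) \<or>
       (bfm_stop 2 R us Sp Sc \<and> (t \<ge> 2 \<longrightarrow> (\<exists>j\<in>{1,2}. v (Sp j) - sum p (Sp j) + (v us - sum p us) > r / \<alpha>)))" using IH unfolding run_concl_def R0_def r_def by (elim conjE) assumption
  have ex: "\<exists>Old Rp Rc. R0 - R \<subseteq> Old \<union> Rp \<union> Rc \<and> Old \<subseteq> N \<and>
        good N v c (Sp 1) (Sp 2) Rp (4 + (r / \<alpha>) / B) \<and>
        good N v c (Sc 1) (Sc 2) Rc (4 + r / B) \<and>
        (\<forall>T\<subseteq>Old. v T \<le> K * (r / \<alpha>) + 2 * (4 + (r / \<alpha>) / B) * sum c T)"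
    using IH unfolding run_concl_def R0_def r_def K_def by (elim conjE) assumption
  then obtain Old Rp Rc where O1: "R0 - R \<subseteq> Old \<union> Rp \<union> Rc" "Old \<subseteq> N"
      and O2: "good N v c (Sp 1) (Sp 2) Rp (4 + (r / \<alpha>) / B)"
      and O3: "good N v c (Sc 1) (Sc 2) Rc (4 + r / B)"
      and O4: "\<forall>T\<subseteq>Old. v T \<le> K * (r / \<alpha>) + 2 * (4 + (r / \<alpha>) / B) * sum c T"
    by (elim exE conjE)
  have RN: "R \<subseteq> N" using I1(1) unfolding R0_def by auto
  have U: "(\<Union>i\<in>{1..2::nat}. Sc i) = Sc 1 \<union> Sc 2" unfolding two_set by simp
  have setxs: "set xs = R - (Sc 1 \<union> Sc 2 \<union> us)" unfolding xs_def U using ordN RN by auto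
  have RC: "round_concl N v c (4 + \<rho>' / B) \<rho>' xs R R p us (\<lambda>_. {}) R' p' us' S'"
  proof (rule round_inv[OF fin sm nn nz cn Bp rpos(2)])
    show "bfm_round v c B 4 2 \<rho>' xs R p us (\<lambda>_. {}) R' p' us' S'" using rd unfolding xs_def \<rho>'_def .
    show "distinct xs" unfolding xs_def using dist by simp
    show "set xs \<subseteq> R" "R \<subseteq> R" "R \<subseteq> N" using setxs RN by auto
    show "set xs \<inter> ({} \<union> {}) = {}" by simp
    show "good N v c {} {} (R - R) (4 + \<rho>' / B)" using good_empty[OF nz] by simp
    show "\<forall>u\<in>R. c u \<le> p u" by (rule I1(2))
    show "{} \<subseteq> R" "{} \<subseteq> R" by auto
    show "\<forall>i\<in>{1,2}. 4 * sum p {} \<le> v {} \<and> v {} - sum p {} \<le> \<rho>'" using nz rpos unfolding normalized_def by simp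
  qed
  have C1: "R' \<subseteq> R" "R - R' \<subseteq> set xs" and C2: "good N v c (S' 1) (S' 2) (R - R') (4 + \<rho>' / B)"
    and C3: "\<forall>u\<in>R'. c u \<le> p' u" "S' 1 \<subseteq> R'" "S' 2 \<subseteq> R'"
    and C4: "\<forall>i\<in>{1,2}. 4 * sum p' (S' i) \<le> v (S' i) \<and> v (S' i) - sum p' (S' i) \<le> \<rho>'"
    and C5: "\<forall>u. u \<notin> set xs \<longrightarrow> p' u = p u"
    and C6: "(us' = us \<and> set xs \<subseteq> S' 1 \<union> S' 2 \<union> (R - R')) \<or>
      (\<exists>u\<in>set xs. us' = {u} \<and> u \<in> R' \<and> 4 * p' u \<le> v {u} \<and>
          (\<exists>j\<in>{1,2}. v (S' j) - sum p' (S' j) + (v {u} - p' u) > \<rho>'))"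
    using RC unfolding round_concl_def by auto
  have ScR': "Sc 1 \<subseteq> R'" "Sc 2 \<subseteq> R'" using C1 I1 setxs by auto
  have pSc: "sum p' (Sc 1) = sum p (Sc 1)" "sum p' (Sc 2) = sum p (Sc 2)" "sum p' us = sum p us"
    using sum_off[OF C5] setxs by auto
  have usR': "us' \<subseteq> R'" using C6 C1 I1 setxs by auto
  have usform: "us' = {} \<or> (\<exists>u. us' = {u} \<and> 4 * p' u \<le> v {u})"
  proof (cases "us' = us")
    case True
    then show ?thesis using I2 C5 setxs by auto
  next
    case False
    then show ?thesis using C6 by auto
  qed
  have price: "\<forall>i\<in>{1,2}. 4 * sum p' (Sc i) \<le> v (Sc i) \<and> v (Sc i) - sum p' (Sc i) \<le> \<rho>' / \<alpha> \<and>
                4 * sum p' (S' i) \<le> v (S' i) \<and> v (S' i) - sum p' (S' i) \<le> \<rho>'"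
    using I3 C4 pSc rr by auto
  have RpN: "Rp \<subseteq> N" using O2 unfolding good_def by auto
  have oldb: "\<forall>T\<subseteq>Old \<union> Rp. v T \<le> K * (\<rho>' / \<alpha>) + 2 * (4 + (\<rho>' / \<alpha>) / B) * sum c T"
  proof (intro allI impI)
    fix T assume T: "T \<subseteq> Old \<union> Rp"
    have TN: "T \<subseteq> N" using T O1(2) RpN by auto
    have finT: "finite T" using TN fin finite_subset by blast
    have y0: "r / \<alpha> \<ge> 0" using rpos al by simp
    have x0: "4 + (r / \<alpha>) / B \<ge> 0" using divide_nonneg_pos[OF y0 Bp] by linarith
    have "v T = v ((T \<inter> Old) \<union> (T - Old))" by (simp add: Int_Diff_Un)
    also have "\<dots> \<le> v (T \<inter> Old) + v (T - Old)" by (rule subadd[OF sm fin nn]) (use TN in auto)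
    finally have a: "v T \<le> v (T \<inter> Old) + v (T - Old)" .
    have b1: "v (T \<inter> Old) \<le> K * (r / \<alpha>) + 2 * (4 + (r / \<alpha>) / B) * sum c (T \<inter> Old)"
      using O4 by auto
    have b2: "v (T - Old) \<le> v (Sp 1) + v (Sp 2) + 2 * (4 + (r / \<alpha>) / B) * sum c (T - Old)"
      by (rule group_rej[OF sm fin nn cn x0 O2]) (use T in auto)
    have s: "v (Sp 1) \<le> 4 / 3 * (r / \<alpha>)" "v (Sp 2) \<le> 4 / 3 * (r / \<alpha>)"
      using I3 v_le_price by (meson insertCI)+
    have c1: "sum c (T \<inter> Old) \<ge> 0" "sum c (T - Old) \<ge> 0" using cn TN by (auto intro!: sum_nonneg)
    have cs: "sum c T = sum c (T \<inter> Old) + sum c (T - Old)" using finT by (rule sum.Int_Diff)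
    have "v (T \<inter> Old) + v (T - Old) \<le> 8 / (3 * (\<alpha> - 1)) * (\<alpha> * (r / \<alpha>)) + 2 * (4 + (\<alpha> * (r / \<alpha>)) / B) * (sum c (T \<inter> Old) + sum c (T - Old))"
      by (rule old_arith[OF al y0 Bp c1 _ b2 s]) (use b1 K_def in simp)
    then show "v T \<le> K * (\<rho>' / \<alpha>) + 2 * (4 + (\<rho>' / \<alpha>) / B) * sum c T"
      using a cs rr al K_def by simp
  qed
  have Egoal: "(\<exists>j\<in>{1,2}. v (S' j) - sum p' (S' j) + (v us' - sum p' us') > \<rho>') \<or>
       (bfm_stop 2 R' us' Sc S' \<and> (Suc t \<ge> 2 \<longrightarrow> (\<exists>j\<in>{1,2}. v (Sc j) - sum p' (Sc j) + (v us' - sum p' us') > \<rho>' / \<alpha>)))"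
  proof (cases "us' = us \<and> set xs \<subseteq> S' 1 \<union> S' 2 \<union> (R - R')")
    case True
    have stop: "bfm_stop 2 R' us' Sc S'"
      unfolding bfm_stop_def two_set using True C1 setxs by auto
    have "Suc t \<ge> 2 \<longrightarrow> (\<exists>j\<in>{1,2}. v (Sc j) - sum p' (Sc j) + (v us' - sum p' us') > \<rho>' / \<alpha>)"
    proof
      assume "Suc t \<ge> 2"
      then have "t \<ge> 1" "\<not> bfm_stop 2 R us Sp Sc" using sc by auto
      then have "\<exists>j\<in>{1,2}. v (Sc j) - sum p (Sc j) + (v us - sum p us) > r" using I5 by auto
      then show "\<exists>j\<in>{1,2}. v (Sc j) - sum p' (Sc j) + (v us' - sum p' us') > \<rho>' / \<alpha>"
        using True pSc rr by auto
    qed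
    then show ?thesis using stop by blast
  next
    case False
    then obtain u j where u: "us' = {u}" "j \<in> {1,2}" "v (S' j) - sum p' (S' j) + (v {u} - p' u) > \<rho>'"
      using C6 by blast
    then show ?thesis by auto
  qed
  show ?thesis unfolding run_concl_def
  proof (intro conjI)
    show "R' \<subseteq> {u \<in> N. c u \<le> B}" using C1 I1 R0_def by auto
    show "\<forall>u\<in>R'. c u \<le> p' u" by (rule C3(1))
    show "Sc 1 \<subseteq> R'" "Sc 2 \<subseteq> R'" "S' 1 \<subseteq> R'" "S' 2 \<subseteq> R'" "us' \<subseteq> R'" using ScR' C3 usR' by auto
    show "us' = {} \<or> (\<exists>u. us' = {u} \<and> 4 * p' u \<le> v {u})" by (rule usform)
    show "\<forall>i\<in>{1,2}. 4 * sum p' (Sc i) \<le> v (Sc i) \<and> v (Sc i) - sum p' (Sc i) \<le> bfm_rho \<alpha> \<epsilon> (Suc t) / \<alpha> \<and>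
                4 * sum p' (S' i) \<le> v (S' i) \<and> v (S' i) - sum p' (S' i) \<le> bfm_rho \<alpha> \<epsilon> (Suc t)"
      using price unfolding \<rho>'_def .
    show "\<exists>Old Rp Rc. {u \<in> N. c u \<le> B} - R' \<subseteq> Old \<union> Rp \<union> Rc \<and> Old \<subseteq> N \<and>
        good N v c (Sc 1) (Sc 2) Rp (4 + (bfm_rho \<alpha> \<epsilon> (Suc t) / \<alpha>) / B) \<and>
        good N v c (S' 1) (S' 2) Rc (4 + bfm_rho \<alpha> \<epsilon> (Suc t) / B) \<and>
        (\<forall>T\<subseteq>Old. v T \<le> 8 / (3 * (\<alpha> - 1)) * (bfm_rho \<alpha> \<epsilon> (Suc t) / \<alpha>) + 2 * (4 + (bfm_rho \<alpha> \<epsilon> (Suc t) / \<alpha>) / B) * sum c T)"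
    proof (intro exI conjI)
      show "{u \<in> N. c u \<le> B} - R' \<subseteq> (Old \<union> Rp) \<union> Rc \<union> (R - R')" using O1 R0_def by auto
      show "Old \<union> Rp \<subseteq> N" using O1 RpN by auto
      show "good N v c (Sc 1) (Sc 2) Rc (4 + (bfm_rho \<alpha> \<epsilon> (Suc t) / \<alpha>) / B)"
        using O3 rr unfolding \<rho>'_def r_def by simp
      show "good N v c (S' 1) (S' 2) (R - R') (4 + bfm_rho \<alpha> \<epsilon> (Suc t) / B)"
        using C2 unfolding \<rho>'_def .
      show "\<forall>T\<subseteq>Old \<union> Rp. v T \<le> 8 / (3 * (\<alpha> - 1)) * (bfm_rho \<alpha> \<epsilon> (Suc t) / \<alpha>) + 2 * (4 + (bfm_rho \<alpha> \<epsilon> (Suc t) / \<alpha>) / B) * sum c T"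
        using oldb unfolding K_def \<rho>'_def .
    qed
    show "1 \<le> Suc t \<longrightarrow> (\<exists>j\<in>{1,2}. v (S' j) - sum p' (S' j) + (v us' - sum p' us') > bfm_rho \<alpha> \<epsilon> (Suc t)) \<or>
       (bfm_stop 2 R' us' Sc S' \<and> (Suc t \<ge> 2 \<longrightarrow> (\<exists>j\<in>{1,2}. v (Sc j) - sum p' (Sc j) + (v us' - sum p' us') > bfm_rho \<alpha> \<epsilon> (Suc t) / \<alpha>)))"
      using Egoal unfolding \<rho>'_def by blast
  qed
qed

lemma run_inv:
  assumes fin: "finite N" and sm: "submodular_on N v" and nn: "nonneg_on N v" and nz: "normalized v"
    and cn: "\<forall>u\<in>N. c u \<ge> 0" and Bp: "B > 0" and ep: "\<epsilon> > 0" and al: "\<alpha> > 1"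
    and ordN: "set ord = N" and dist: "distinct ord"
  shows "bfm_run N ord v c B \<alpha> 4 \<epsilon> 2 t R p us Sp Sc \<Longrightarrow> run_concl N v c B \<alpha> \<epsilon> t R p us Sp Sc"
proof (induction rule: bfm_run.induct)
  case init
  show ?case by (rule run_init[OF nz al ep Bp])
next
  case (step t R p us Sp Sc R' p' us' S')
  show ?case by (rule run_step[OF assms step.IH step.hyps(2)]) (use step.hyps(3) in simp)
qed



lemma final_arith:
  fixes \<alpha> bst \<epsilon> cO r vO :: real
  assumes "\<alpha> = 1 + 2 * sqrt 6 / 3" "bst \<ge> 0" "\<epsilon> > 0" "cO \<ge> 0" "r \<ge> 0"
    and "r \<le> 2 * \<alpha> * bst + \<epsilon>"
    and "vO \<le> 8 / (3 * (\<alpha> - 1)) * (r / \<alpha>) + 12 * bst + 8 * cO + 2 * r"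
  shows "0.0328 * vO \<le> bst + cO + \<epsilon> / 4"
proof -
  have s1: "sqrt 6 \<ge> 12/5" by (rule real_le_rsqrt) (simp add: power2_eq_square)
  have "sqrt 6 \<le> sqrt ((99/40)^2)" by (rule real_sqrt_le_mono) (simp add: power2_eq_square)
  then have s2: "sqrt 6 \<le> 99/40" by simp
  have a1: "\<alpha> \<ge> 13/5" "\<alpha> \<le> 53/20" using s1 s2 assms(1) by auto
  have "8 / (3 * (\<alpha> - 1)) * (r / \<alpha>) = r * (8 / (3 * (\<alpha> - 1) * \<alpha>))" by (simp add: field_simps)
  also have "8 / (3 * (\<alpha> - 1) * \<alpha>) \<le> 13/20"
  proof -
    have "3 * (\<alpha> - 1) * \<alpha> \<ge> 3 * (8/5) * (13/5)" using a1 by (intro mult_mono) auto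
    then show ?thesis by (simp add: divide_le_eq)
  qed
  then have "r * (8 / (3 * (\<alpha> - 1) * \<alpha>)) \<le> r * (13/20)" using assms(5) by (intro mult_left_mono) auto
  finally have k: "8 / (3 * (\<alpha> - 1)) * (r / \<alpha>) \<le> 13/20 * r" by simp
  have "2 * \<alpha> * bst \<le> 53/10 * bst" using a1 assms(2) by (intro mult_right_mono) auto
  then have "r \<le> 53/10 * bst + \<epsilon>" using assms(6) by linarith
  then have v2: "vO \<le> 5209/200 * bst + 53/20 * \<epsilon> + 8 * cO" using assms(7) k by linarith
  have "41/1250 * vO \<le> 41/1250 * (5209/200 * bst + 53/20 * \<epsilon> + 8 * cO)"
    using v2 by (intro mult_left_mono) auto
  moreover have "41/1250 * (5209/200 * bst + 53/20 * \<epsilon> + 8 * cO) \<le> bst + cO + \<epsilon> / 4"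
    using assms(2-4) by (simp add: algebra_simps)
  ultimately have "41/1250 * vO \<le> bst + cO + \<epsilon> / 4" by linarith
  moreover have "(0.0328::real) * vO = 41/1250 * vO" by simp
  ultimately show ?thesis by simp
qed

lemma cost_arith:
  fixes X Y a b d cO r B :: real
  assumes "X \<le> Y" "a \<ge> 0" "b \<ge> 0" "d \<ge> 0" "a + b + d \<le> cO" "Y \<ge> 0" "Y = 4 + r / B" "(r / B) * cO \<le> r"
  shows "2 * X * a + 2 * X * b + 2 * Y * d \<le> 8 * cO + 2 * r"
proof -
  have 1: "X * a \<le> Y * a" using assms by (intro mult_right_mono) auto
  have 2: "X * b \<le> Y * b" using assms by (intro mult_right_mono) auto
  have 3: "Y * (a + b + d) \<le> Y * cO" using assms by (intro mult_left_mono) auto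
  have 4: "Y * (a + b + d) = Y * a + Y * b + Y * d" by (simp add: algebra_simps)
  have 5: "Y * cO = 4 * cO + (r / B) * cO" using assms(7) by (simp add: algebra_simps)
  show ?thesis using 1 2 3 4 5 assms(8) by linarith
qed

lemma vO_arith:
  fixes vO t1 t2 t3 t4 s1 s2 s3 s4 k bst C1 C2 C3 Rr :: real
  assumes "vO \<le> t1 + t2 + t3 + t4" "t1 \<le> k + C1" "t2 \<le> 2 * (s1 + s2) + C2" "t3 \<le> 2 * (s3 + s4) + C3"
    "t4 \<le> 4 / 3 * bst" "s1 \<le> 4 / 3 * bst" "s2 \<le> 4 / 3 * bst" "s3 \<le> 4 / 3 * bst" "s4 \<le> 4 / 3 * bst"
    "C1 + C2 + C3 \<le> Rr"
  shows "vO \<le> k + 12 * bst + Rr"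
proof -
  have "2 * (s1 + s2) = 2 * s1 + 2 * s2" "2 * (s3 + s4) = 2 * s3 + 2 * s4" by simp_all
  then show ?thesis using assms by linarith
qed

theorem theorem4p8:
  fixes N :: "'a set" and ord :: "'a list" and v :: "'a set \<Rightarrow> real" and c :: "'a \<Rightarrow> real"
    and B \<epsilon> :: real and Opt Sstar :: "'a set" and p :: "'a \<Rightarrow> real"
  assumes "finite N"
    and "distinct ord" and "set ord = N"
    and "normalized v" and "nonneg_on N v" and "submodular_on N v"
    and "\<forall>u\<in>N. c u \<ge> 0"
    and "B > 0" and "\<epsilon> > 0"
    and "Opt \<subseteq> N" and "sum c Opt \<le> B"
    and "\<forall>S. S \<subseteq> N \<and> sum c S \<le> B \<longrightarrow> v S - sum c S \<le> v Opt - sum c Opt"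
    and "bfm_swm_output N ord v c B (1 + 2 * sqrt 6 / 3) 4 \<epsilon> 2 Sstar p"
  shows "v Sstar - sum c Sstar \<ge> 0.0328 * v Opt - sum c Opt - \<epsilon> / 4"
proof -
  note fin = assms(1) and dist = assms(2) and ordN = assms(3) and nz = assms(4) and nn = assms(5)
    and sm = assms(6) and cn = assms(7) and Bp = assms(8) and ep = assms(9)
  define \<alpha> :: real where "\<alpha> = 1 + 2 * sqrt 6 / 3"
  have al: "\<alpha> > 1" unfolding \<alpha>_def by simp
  obtain M R us Sp Sc where M1: "M \<ge> 1" and run: "bfm_run N ord v c B \<alpha> 4 \<epsilon> 2 M R p us Sp Sc"
    and stop: "bfm_stop 2 R us Sp Sc"
    and cand: "Sstar \<in> {Sp i | i. i \<in> {1..2}} \<union> {Sc i | i. i \<in> {1..2}} \<union> {us}"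
    and best: "\<forall>A\<in>{Sp i | i. i \<in> {1..2}} \<union> {Sc i | i. i \<in> {1..2}} \<union> {us}. v A - sum p A \<le> v Sstar - sum p Sstar"
    using assms(13) unfolding bfm_swm_output_def \<alpha>_def Let_def by blast
  have RC: "run_concl N v c B \<alpha> \<epsilon> M R p us Sp Sc"
    by (rule run_inv[OF fin sm nn nz cn Bp ep al ordN dist run])
  define bst where "bst = v Sstar - sum p Sstar"
  define r where "r = bfm_rho \<alpha> \<epsilon> M"
  define R0 where "R0 = {u \<in> N. c u \<le> B}"
  define K where "K = 8 / (3 * (\<alpha> - 1))"
  have rpos: "r > 0" unfolding r_def using rho_pos al ep by auto
  have M' : " run_concl N v c B \<alpha> \<epsilon> M R p us Sp Sc" by (rule RC)
  have I1a: "R \<subseteq> R0" using RC unfolding run_concl_def R0_def r_def by (elim conjE) assumption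
  have I1b: "\<forall>u\<in>R. c u \<le> p u" using RC unfolding run_concl_def R0_def r_def by (elim conjE) assumption
  have I1c: "Sp 1 \<subseteq> R" using RC unfolding run_concl_def R0_def r_def by (elim conjE) assumption
  have I1d: "Sp 2 \<subseteq> R" using RC unfolding run_concl_def R0_def r_def by (elim conjE) assumption
  have I1e: "Sc 1 \<subseteq> R" using RC unfolding run_concl_def R0_def r_def by (elim conjE) assumption
  have I1f: "Sc 2 \<subseteq> R" using RC unfolding run_concl_def R0_def r_def by (elim conjE) assumption
  have I1g: "us \<subseteq> R" using RC unfolding run_concl_def R0_def r_def by (elim conjE) assumption
  have I2: "us = {} \<or> (\<exists>u. us = {u} \<and> 4 * p u \<le> v {u})"
    using RC unfolding run_concl_def R0_def r_def by (elim conjE) assumption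
  have I3: "\<forall>i\<in>{1,2}. 4 * sum p (Sp i) \<le> v (Sp i) \<and> v (Sp i) - sum p (Sp i) \<le> r / \<alpha> \<and>
                4 * sum p (Sc i) \<le> v (Sc i) \<and> v (Sc i) - sum p (Sc i) \<le> r"
    using RC unfolding run_concl_def R0_def r_def by (elim conjE) assumption
  have I5: "M \<ge> 1 \<longrightarrow> (\<exists>j\<in>{1,2}. v (Sc j) - sum p (Sc j) + (v us - sum p us) > r) \<or>
       (bfm_stop 2 R us Sp Sc \<and> (M \<ge> 2 \<longrightarrow> (\<exists>j\<in>{1,2}. v (Sp j) - sum p (Sp j) + (v us - sum p us) > r / \<alpha>)))"
    using RC unfolding run_concl_def R0_def r_def by (elim conjE) assumption
  have ex: "\<exists>Old Rp Rc. R0 - R \<subseteq> Old \<union> Rp \<union> Rc \<and> Old \<subseteq> N \<and>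
        good N v c (Sp 1) (Sp 2) Rp (4 + (r / \<alpha>) / B) \<and>
        good N v c (Sc 1) (Sc 2) Rc (4 + r / B) \<and>
        (\<forall>T\<subseteq>Old. v T \<le> K * (r / \<alpha>) + 2 * (4 + (r / \<alpha>) / B) * sum c T)"
    using RC unfolding run_concl_def R0_def r_def K_def by (elim conjE) assumption
  then obtain Old Rp Rc where O1: "R0 - R \<subseteq> Old \<union> Rp \<union> Rc" "Old \<subseteq> N"
      and O2: "good N v c (Sp 1) (Sp 2) Rp (4 + (r / \<alpha>) / B)"
      and O3: "good N v c (Sc 1) (Sc 2) Rc (4 + r / B)"
      and O4: "\<forall>T\<subseteq>Old. v T \<le> K * (r / \<alpha>) + 2 * (4 + (r / \<alpha>) / B) * sum c T"
    by (elim exE conjE)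
  have RN: "R \<subseteq> N" using I1a unfolding R0_def by auto
  have cs1: "{Sp i | i. i \<in> {1..2::nat}} = Sp ` {1,2}" unfolding two_set by blast
  have cs2: "{Sc i | i. i \<in> {1..2::nat}} = Sc ` {1,2}" unfolding two_set by blast
  have candset: "{Sp i | i. i \<in> {1..2::nat}} \<union> {Sc i | i. i \<in> {1..2::nat}} \<union> {us} = {us, Sc 1, Sc 2, Sp 1, Sp 2}"
    unfolding cs1 cs2 by simp
  have bestv: "\<forall>A\<in>{us, Sc 1, Sc 2, Sp 1, Sp 2}. v A - sum p A \<le> bst"
    using best unfolding candset bst_def .
  have "Sstar = us \<or> Sstar = Sc 1 \<or> Sstar = Sc 2 \<or> Sstar = Sp 1 \<or> Sstar = Sp 2"
    using cand unfolding candset by simp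
  then have SsR: "Sstar \<subseteq> R" using I1c I1d I1e I1f I1g by (elim disjE) simp_all
  have finSs: "finite Sstar" using finite_subset[OF subset_trans[OF SsR RN] fin] .
  have cSs: "sum c Sstar \<le> sum p Sstar" using I1b SsR by (intro sum_mono) auto
  have lhs: "v Sstar - sum c Sstar \<ge> bst" unfolding bst_def using cSs by linarith
  have usv: "v us - sum p us \<ge> 0 \<and> v us \<le> 4 / 3 * bst"
  proof (cases "us = {}")
    case True
    have "v us - sum p us \<le> bst" using bestv by auto
    then show ?thesis using True nz unfolding normalized_def by simp
  next
    case False
    then obtain u where u: "us = {u}" "4 * p u \<le> v {u}" using I2 by auto
    have "p u \<ge> 0" using u I1g I1b cn RN by fastforce
    moreover have "v us - sum p us \<le> bst" using bestv by auto
    ultimately show ?thesis using u by simp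
  qed
  have bst0: "bst \<ge> 0" using usv bestv by auto
  have vS: "v (Sp 1) \<le> 4 / 3 * bst" "v (Sp 2) \<le> 4 / 3 * bst" "v (Sc 1) \<le> 4 / 3 * bst" "v (Sc 2) \<le> 4 / 3 * bst"
    using I3 bestv by (auto intro: v_le_price)
  have rb: "r \<le> 2 * \<alpha> * bst + \<epsilon>"
  proof -
    have aux: "2 * bst \<le> 2 * \<alpha> * bst" using al bst0 by (simp add: mult_right_mono)
    show ?thesis
    proof (cases "\<exists>j\<in>{1,2}. v (Sc j) - sum p (Sc j) + (v us - sum p us) > r")
      case True
      then obtain j where "j \<in> {1,2::nat}" "v (Sc j) - sum p (Sc j) + (v us - sum p us) > r" by blast
      moreover have "v (Sc j) - sum p (Sc j) \<le> bst" "v us - sum p us \<le> bst" using bestv calculation(1) by auto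
      ultimately show ?thesis using aux ep by linarith
    next
      case False
      then have st: "M \<ge> 2 \<longrightarrow> (\<exists>j\<in>{1,2}. v (Sp j) - sum p (Sp j) + (v us - sum p us) > r / \<alpha>)"
        using I5 M1 by blast
      show ?thesis
      proof (cases "M \<ge> 2")
        case True
        then obtain j where "j \<in> {1,2::nat}" "v (Sp j) - sum p (Sp j) + (v us - sum p us) > r / \<alpha>" using st by blast
        moreover have "v (Sp j) - sum p (Sp j) \<le> bst" "v us - sum p us \<le> bst" using bestv calculation(1) by auto
        ultimately have "r / \<alpha> < 2 * bst" by linarith
        then have "r < 2 * bst * \<alpha>" using al by (simp add: divide_less_eq)
        then show ?thesis using ep by (simp add: algebra_simps)
      next
        case False
        then have "M = 1" using M1 by simp
        then have "r = \<epsilon>" unfolding r_def using rho_one al by simp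
        then show ?thesis using aux bst0 al by (smt (verit) mult_nonneg_nonneg)
      qed
    qed
  qed
  have OptR0: "Opt \<subseteq> R0"
  proof
    fix o' assume o: "o' \<in> Opt"
    have "c o' \<le> sum c Opt"
      using o assms(10) cn fin by (intro member_le_sum) (auto intro: finite_subset)
    then show "o' \<in> R0" using o assms(10,11) unfolding R0_def by auto
  qed
  have Rcov: "R \<subseteq> Sp 1 \<union> Sp 2 \<union> Sc 1 \<union> Sc 2 \<union> us"
    using stop unfolding bfm_stop_def two_set by auto
  define P2 where "P2 = Rp \<union> Sp 1 \<union> Sp 2"
  define P3 where "P3 = Rc \<union> Sc 1 \<union> Sc 2"
  define T1 where "T1 = Opt \<inter> Old"
  define T2 where "T2 = (Opt - Old) \<inter> P2"
  define T3 where "T3 = (Opt - Old - P2) \<inter> P3"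
  define T4 where "T4 = Opt - Old - P2 - P3"
  have OptN: "Opt \<subseteq> N" by (rule assms(10))
  have T4us: "T4 \<subseteq> us" using OptR0 O1 Rcov unfolding T4_def P2_def P3_def by auto
  have Ouni: "Opt = ((T1 \<union> T2) \<union> T3) \<union> T4" unfolding T1_def T2_def T3_def T4_def by auto
  have TsN: "T1 \<subseteq> N" "T2 \<subseteq> N" "T3 \<subseteq> N" "T4 \<subseteq> N" using OptN unfolding T1_def T2_def T3_def T4_def by auto
  have "v (((T1 \<union> T2) \<union> T3) \<union> T4) \<le> v ((T1 \<union> T2) \<union> T3) + v T4"
    by (rule subadd[OF sm fin nn]) (use TsN in auto)
  then have "v Opt \<le> v ((T1 \<union> T2) \<union> T3) + v T4" using Ouni by metis
  also have "v ((T1 \<union> T2) \<union> T3) \<le> v (T1 \<union> T2) + v T3" by (rule subadd[OF sm fin nn]) (use TsN in auto)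
  also have "v (T1 \<union> T2) \<le> v T1 + v T2" by (rule subadd[OF sm fin nn]) (use TsN in auto)
  finally have vO: "v Opt \<le> v T1 + v T2 + v T3 + v T4" by simp
  have y0: "r / \<alpha> \<ge> 0" using rpos al by simp
  have x0: "4 + (r / \<alpha>) / B \<ge> 0" using divide_nonneg_pos[OF y0 Bp] by linarith
  have x1: "4 + r / B \<ge> 0" using divide_nonneg_pos[OF less_imp_le[OF rpos] Bp] by linarith
  have "r / \<alpha> \<le> r" using rpos al by (simp add: divide_le_eq)
  then have xx: "(r / \<alpha>) / B \<le> r / B" using Bp by (rule divide_right_mono[OF _ less_imp_le])
  have b1: "v T1 \<le> K * (r / \<alpha>) + 2 * (4 + (r / \<alpha>) / B) * sum c T1" using O4 unfolding T1_def by auto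
  have b2: "v T2 \<le> 2 * (v (Sp 1) + v (Sp 2)) + 2 * (4 + (r / \<alpha>) / B) * sum c (T2 \<inter> Rp)"
    by (rule group_bound[OF sm fin nn cn x0 O2]) (auto simp: T2_def P2_def)
  have b3: "v T3 \<le> 2 * (v (Sc 1) + v (Sc 2)) + 2 * (4 + r / B) * sum c (T3 \<inter> Rc)"
    by (rule group_bound[OF sm fin nn cn x1 O3]) (auto simp: T3_def P3_def)
  have b4: "v T4 \<le> 4 / 3 * bst"
  proof (cases "T4 = {}")
    case True then show ?thesis using nz bst0 unfolding normalized_def by simp
  next
    case False
    then have "T4 = us" using T4us I2 by auto
    then show ?thesis using usv by simp
  qed
  have cpos: "sum c T1 \<ge> 0" "sum c (T2 \<inter> Rp) \<ge> 0" "sum c (T3 \<inter> Rc) \<ge> 0"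
    using TsN cn by (auto intro!: sum_nonneg)
  have csum: "sum c T1 + sum c (T2 \<inter> Rp) + sum c (T3 \<inter> Rc) \<le> sum c Opt"
  proof -
    have finO: "finite Opt" using OptN fin finite_subset by blast
    have d: "T1 \<inter> (T2 \<inter> Rp) = {}" "(T1 \<union> (T2 \<inter> Rp)) \<inter> (T3 \<inter> Rc) = {}"
      unfolding T1_def T2_def T3_def P2_def by auto
    have f: "finite T1" "finite (T2 \<inter> Rp)" "finite (T3 \<inter> Rc)"
      using finO unfolding T1_def T2_def T3_def by auto
    have "sum c T1 + sum c (T2 \<inter> Rp) + sum c (T3 \<inter> Rc) = sum c (T1 \<union> (T2 \<inter> Rp) \<union> (T3 \<inter> Rc))"
      using f d by (simp add: sum.union_disjoint)
    also have "\<dots> \<le> sum c Opt"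
      by (rule sum_mono2[OF finO]) (use OptN cn in \<open>auto simp: T1_def T2_def T3_def\<close>)
    finally show ?thesis .
  qed
  have cO0: "sum c Opt \<ge> 0" using OptN cn by (auto intro!: sum_nonneg)
  have rB: "(r / B) * sum c Opt \<le> r"
  proof -
    have "(r / B) * sum c Opt \<le> (r / B) * B" using assms(11) rpos Bp by (intro mult_left_mono) auto
    then show ?thesis using Bp by simp
  qed
  have costs: "2 * (4 + (r / \<alpha>) / B) * sum c T1 + 2 * (4 + (r / \<alpha>) / B) * sum c (T2 \<inter> Rp)
      + 2 * (4 + r / B) * sum c (T3 \<inter> Rc) \<le> 8 * sum c Opt + 2 * r"
    by (rule cost_arith[OF _ cpos csum x1 refl rB]) (use xx in simp)
  have vOb: "v Opt \<le> 8 / (3 * (\<alpha> - 1)) * (r / \<alpha>) + 12 * bst + 8 * sum c Opt + 2 * r"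
    using vO_arith[OF vO b1[unfolded K_def] b2 b3 b4 vS costs] by (simp add: algebra_simps)
  have "0.0328 * v Opt \<le> bst + sum c Opt + \<epsilon> / 4"
    by (rule final_arith[OF \<alpha>_def bst0 ep cO0 less_imp_le[OF rpos] rb vOb])
  then show ?thesis using lhs by linarith
qed


end
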